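(* Let $\mathcal X\subseteq[-1,1]^n$ and let $f:\mathcal X\to\{\pm1\}$ be a $(K,M)$-PTF. Then $f$ is a $(K,2M,B,\xi)$-PTF for $\xi=\frac1{2(n+1)^{\frac{K+1}2}KM}$ and $B=2(n+1)^{K/2}M$.
   Context: $\|p\|_{\mathrm{co}}$ denotes the Euclidean norm of the coefficient vector of a polynomial $p$. $f:\mathcal X\to\{\pm1\}$ is a $(K,M)$-PTF if there is a polynomial $p:\mathbb R^n\to\mathbb R$ of degree $\le K$ with $\|p\|_{\mathrm{co}}\le M$ and $p(\mathbf x)f(\mathbf x)\ge1$ for all $\mathbf x\in\mathcal X$. With $\mathcal B_r(\mathbf x)=\{\tilde{\mathbf x}\in[-1,1]^n:\|\mathbf x-\tilde{\mathbf x}\|_\infty\le r\}$, $f$ is a $(K,M,B,\xi)$-PTF if there is such a polynomial $p$ (degree $\le K$, $\|p\|_{\mathrm{co}}\le M$) with $B\ge p(\tilde{\mathbf x})f(\mathbf x)\ge1$ for all $\mathbf x\in\mathcal X$ and $\tilde{\mathbf x}\in\mathcal B_\xi(\mathbf x)$. *)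

theory Defs
  imports "HOL-Analysis.Analysis"
begin

text \<open>Points of R^n are vectors of type real^'n, with n = CARD('n).
A multivariate real polynomial of degree at most K is represented by its coefficient
function on exponent vectors (monomials) alpha :: 'n => nat, supported on the
monomials of total degree at most K.\<close>

definition monomials :: "nat \<Rightarrow> ('n::finite \<Rightarrow> nat) set" where
  "monomials K = {\<alpha>. (\<Sum>i\<in>UNIV. \<alpha> i) \<le> K}"

definition is_poly_deg :: "nat \<Rightarrow> (('n::finite \<Rightarrow> nat) \<Rightarrow> real) \<Rightarrow> bool" where
  "is_poly_deg K c \<longleftrightarrow> (\<forall>\<alpha>. c \<alpha> \<noteq> 0 \<longrightarrow> \<alpha> \<in> monomials K)"

definition poly_eval :: "nat \<Rightarrow> (('n::finite \<Rightarrow> nat) \<Rightarrow> real) \<Rightarrow> real^'n \<Rightarrow> real" where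
  "poly_eval K c x = (\<Sum>\<alpha>\<in>monomials K. c \<alpha> * (\<Prod>i\<in>UNIV. (x $ i) ^ (\<alpha> i)))"

definition coeff_norm :: "nat \<Rightarrow> (('n::finite \<Rightarrow> nat) \<Rightarrow> real) \<Rightarrow> real" where
  "coeff_norm K c = sqrt (\<Sum>\<alpha>\<in>monomials K. (c \<alpha>)\<^sup>2)"

definition cube :: "(real^'n::finite) set" where
  "cube = {x. \<forall>i. \<bar>x $ i\<bar> \<le> 1}"

definition inf_box :: "real \<Rightarrow> real^'n::finite \<Rightarrow> (real^'n) set" where
  "inf_box r x = {y \<in> cube. \<forall>i. \<bar>x $ i - y $ i\<bar> \<le> r}"

definition is_PTF :: "nat \<Rightarrow> real \<Rightarrow> (real^'n::finite) set \<Rightarrow> (real^'n \<Rightarrow> real) \<Rightarrow> bool" where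
  "is_PTF K M X f \<longleftrightarrow> (\<exists>c. is_poly_deg K c \<and> coeff_norm K c \<le> M \<and>
      (\<forall>x\<in>X. poly_eval K c x * f x \<ge> 1))"

definition is_robust_PTF :: "nat \<Rightarrow> real \<Rightarrow> real \<Rightarrow> real \<Rightarrow> (real^'n::finite) set \<Rightarrow> (real^'n \<Rightarrow> real) \<Rightarrow> bool" where
  "is_robust_PTF K M B \<xi> X f \<longleftrightarrow> (\<exists>c. is_poly_deg K c \<and> coeff_norm K c \<le> M \<and>
      (\<forall>x\<in>X. \<forall>y\<in>inf_box \<xi> x. 1 \<le> poly_eval K c y * f x \<and> poly_eval K c y * f x \<le> B))"

end

theory Submission
  imports Defs
begin

lemma monomials_0: "monomials 0 = {(\<lambda>_. 0) :: 'n::finite \<Rightarrow> nat}"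
  by (auto simp: monomials_def)

lemma monomials_Suc_sub:
  "monomials (Suc K) \<subseteq> monomials K \<union> (\<Union>i\<in>(UNIV::'n::finite set). (\<lambda>\<alpha>. \<alpha>(i := Suc (\<alpha> i))) ` monomials K)"
proof
  fix \<alpha> :: "'n \<Rightarrow> nat" assume a: "\<alpha> \<in> monomials (Suc K)"
  show "\<alpha> \<in> monomials K \<union> (\<Union>i. (\<lambda>\<alpha>. \<alpha>(i := Suc (\<alpha> i))) ` monomials K)"
  proof (cases "\<alpha> \<in> monomials K")
    case False
    with a have s: "(\<Sum>i\<in>UNIV. \<alpha> i) = Suc K" by (auto simp: monomials_def)
    then obtain i where i: "\<alpha> i > 0"
      by (metis Zero_not_Suc gr0I sum.neutral)
    define \<beta> where "\<beta> = \<alpha>(i := \<alpha> i - 1)"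
    have "(\<Sum>j\<in>UNIV. \<alpha> j) = \<alpha> i + (\<Sum>j\<in>UNIV - {i}. \<alpha> j)"
      by (simp add: sum.remove)
    moreover have "(\<Sum>j\<in>UNIV. \<beta> j) = \<beta> i + (\<Sum>j\<in>UNIV - {i}. \<beta> j)"
      by (simp add: sum.remove)
    moreover have "(\<Sum>j\<in>UNIV - {i}. \<beta> j) = (\<Sum>j\<in>UNIV - {i}. \<alpha> j)"
      by (rule sum.cong) (auto simp: \<beta>_def)
    ultimately have "(\<Sum>j\<in>UNIV. \<beta> j) = K" using s i by (simp add: \<beta>_def)
    hence "\<beta> \<in> monomials K" by (simp add: monomials_def)
    moreover have "\<alpha> = \<beta>(i := Suc (\<beta> i))" using i by (auto simp: \<beta>_def)
    ultimately show ?thesis by blast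
  qed simp
qed

lemma monomials_finite_card:
  "finite (monomials K :: ('n::finite \<Rightarrow> nat) set) \<and> card (monomials K :: ('n \<Rightarrow> nat) set) \<le> (CARD('n) + 1) ^ K"
proof (induction K)
  case 0
  then show ?case by (simp add: monomials_0)
next
  case (Suc K)
  let ?S = "monomials K :: ('n \<Rightarrow> nat) set"
  let ?T = "?S \<union> (\<Union>i\<in>(UNIV::'n set). (\<lambda>\<alpha>. \<alpha>(i := Suc (\<alpha> i))) ` ?S)"
  have fT: "finite ?T" using Suc by auto
  have "card ?T \<le> card ?S + card (\<Union>i\<in>(UNIV::'n set). (\<lambda>\<alpha>. \<alpha>(i := Suc (\<alpha> i))) ` ?S)"
    by (rule card_Un_le)
  also have "card (\<Union>i\<in>(UNIV::'n set). (\<lambda>\<alpha>. \<alpha>(i := Suc (\<alpha> i))) ` ?S)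
      \<le> (\<Sum>i\<in>(UNIV::'n set). card ((\<lambda>\<alpha>. \<alpha>(i := Suc (\<alpha> i))) ` ?S))"
    by (rule card_UN_le) simp
  also have "\<dots> \<le> (\<Sum>i\<in>(UNIV::'n set). card ?S)"
    by (rule sum_mono) (rule card_image_le, use Suc in simp)
  finally have "card ?T \<le> (CARD('n) + 1) * card ?S" by simp
  also have "\<dots> \<le> (CARD('n) + 1) * (CARD('n) + 1) ^ K" using Suc by (intro mult_le_mono2) simp
  finally have cT: "card ?T \<le> (CARD('n) + 1) ^ Suc K" by simp
  have sub: "monomials (Suc K) \<subseteq> ?T" by (rule monomials_Suc_sub)
  show ?case using finite_subset[OF sub fT] card_mono[OF fT sub] cT by linarith
qed

lemma prod_diff_bound:
  fixes a b :: "'i \<Rightarrow> real"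
  assumes "finite S" "\<And>i. i \<in> S \<Longrightarrow> \<bar>a i\<bar> \<le> 1" "\<And>i. i \<in> S \<Longrightarrow> \<bar>b i\<bar> \<le> 1"
  shows "\<bar>(\<Prod>i\<in>S. a i) - (\<Prod>i\<in>S. b i)\<bar> \<le> (\<Sum>i\<in>S. \<bar>a i - b i\<bar>)"
  using assms
proof (induction S rule: finite_induct)
  case empty
  then show ?case by simp
next
  case (insert x F)
  let ?A = "\<Prod>i\<in>F. a i" and ?B = "\<Prod>i\<in>F. b i"
  have A: "\<bar>?A\<bar> \<le> 1" using insert by (simp add: abs_prod prod_le_1)
  have bx: "\<bar>b x\<bar> \<le> 1" using insert by simp
  have IH: "\<bar>?A - ?B\<bar> \<le> (\<Sum>i\<in>F. \<bar>a i - b i\<bar>)" using insert by simp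
  have "a x * ?A - b x * ?B = (a x - b x) * ?A + b x * (?A - ?B)" by (simp add: algebra_simps)
  hence "\<bar>a x * ?A - b x * ?B\<bar> \<le> \<bar>a x - b x\<bar> * \<bar>?A\<bar> + \<bar>b x\<bar> * \<bar>?A - ?B\<bar>"
    by (metis abs_mult abs_triangle_ineq)
  also have "\<dots> \<le> \<bar>a x - b x\<bar> * 1 + 1 * \<bar>?A - ?B\<bar>"
    by (intro add_mono mult_mono A bx) auto
  finally show ?case using insert IH by simp
qed

lemma power_diff_bound:
  fixes x y :: real
  assumes "\<bar>x\<bar> \<le> 1" "\<bar>y\<bar> \<le> 1"
  shows "\<bar>x ^ k - y ^ k\<bar> \<le> real k * \<bar>x - y\<bar>"
  using prod_diff_bound[of "{..<k}" "\<lambda>_. x" "\<lambda>_. y"] assms by simp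


lemma mono_abs_le1:
  fixes y :: "real^'n::finite"
  assumes "y \<in> cube"
  shows "\<bar>\<Prod>i\<in>UNIV. (y $ i) ^ (\<alpha> i)\<bar> \<le> 1"
  using assms by (auto simp: cube_def abs_prod power_abs intro!: prod_le_1 power_le_one)

lemma mono_diff_le:
  fixes x y :: "real^'n::finite"
  assumes "x \<in> cube" "y \<in> cube" "\<forall>i. \<bar>x $ i - y $ i\<bar> \<le> r"
  shows "\<bar>(\<Prod>i\<in>UNIV. (y $ i) ^ (\<alpha> i)) - (\<Prod>i\<in>UNIV. (x $ i) ^ (\<alpha> i))\<bar> \<le> real (\<Sum>i\<in>UNIV. \<alpha> i) * r"
proof -
  have "\<bar>(\<Prod>i\<in>UNIV. (y $ i) ^ (\<alpha> i)) - (\<Prod>i\<in>UNIV. (x $ i) ^ (\<alpha> i))\<bar>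
      \<le> (\<Sum>i\<in>UNIV. \<bar>(y $ i) ^ (\<alpha> i) - (x $ i) ^ (\<alpha> i)\<bar>)"
    using assms by (intro prod_diff_bound) (auto simp: cube_def power_abs intro!: power_le_one)
  also have "\<dots> \<le> (\<Sum>i\<in>UNIV. real (\<alpha> i) * r)"
  proof (rule sum_mono)
    fix i
    have "\<bar>(y $ i) ^ (\<alpha> i) - (x $ i) ^ (\<alpha> i)\<bar> \<le> real (\<alpha> i) * \<bar>y $ i - x $ i\<bar>"
      using assms by (intro power_diff_bound) (auto simp: cube_def)
    also have "\<dots> \<le> real (\<alpha> i) * r" using assms(3)[rule_format, of i]
      by (intro mult_left_mono) auto
    finally show "\<bar>(y $ i) ^ (\<alpha> i) - (x $ i) ^ (\<alpha> i)\<bar> \<le> real (\<alpha> i) * r" .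
  qed
  also have "\<dots> = real (\<Sum>i\<in>UNIV. \<alpha> i) * r" by (simp add: sum_distrib_right)
  finally show ?thesis .
qed

lemma abs_coeff_sum_le:
  fixes c :: "('n::finite \<Rightarrow> nat) \<Rightarrow> real"
  assumes "coeff_norm K c \<le> M"
  shows "(\<Sum>\<alpha>\<in>monomials K. \<bar>c \<alpha>\<bar>) \<le> (real CARD('n) + 1) powr (real K / 2) * M"
proof -
  let ?S = "(\<Sum>\<alpha>\<in>monomials K. \<bar>c \<alpha>\<bar>)"
  let ?N = "card (monomials K :: ('n \<Rightarrow> nat) set)"
  have "?S\<^sup>2 \<le> (\<Sum>\<alpha>\<in>monomials K. (\<bar>c \<alpha>\<bar>)\<^sup>2) * ?N"
    by (rule sum_squared_le_sum_of_squares)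
  hence "?S \<le> sqrt ((\<Sum>\<alpha>\<in>monomials K. (c \<alpha>)\<^sup>2) * ?N)"
    by (simp add: real_le_rsqrt)
  also have "\<dots> = coeff_norm K c * sqrt ?N" by (simp add: coeff_norm_def real_sqrt_mult)
  also have "\<dots> \<le> M * sqrt ((real CARD('n) + 1) ^ K)"
  proof (rule mult_mono)
    have "real ?N \<le> real ((CARD('n) + 1) ^ K)"
      using monomials_finite_card[where 'n='n, of K] by linarith
    thus "sqrt ?N \<le> sqrt ((real CARD('n) + 1) ^ K)" by (simp add: add.commute)
  qed (use assms in \<open>auto simp: coeff_norm_def\<close>, meson order_trans real_sqrt_ge_zero sum_nonneg zero_le_power2)
  also have "sqrt ((real CARD('n) + 1) ^ K) = (real CARD('n) + 1) powr (real K / 2)"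
    by (simp add: sqrt_def powr_realpow[symmetric] root_powr_inverse powr_powr)
  finally show ?thesis by (simp add: mult.commute)
qed

theorem lemma14:
  fixes X :: "(real^'n::finite) set" and f :: "real^'n \<Rightarrow> real"
    and K :: nat and M :: real
  assumes "X \<subseteq> cube"
    and "\<forall>x\<in>X. f x \<in> {-1, 1}"
    and "is_PTF K M X f"
  shows "is_robust_PTF K (2 * M)
           (2 * (real CARD('n) + 1) powr (real K / 2) * M)
           (1 / (2 * (real CARD('n) + 1) powr ((real K + 1) / 2) * real K * M))
           X f"
proof -
  obtain c where pd: "is_poly_deg K c" and cn: "coeff_norm K c \<le> M"
    and pos: "\<forall>x\<in>X. poly_eval K c x * f x \<ge> 1"
    using assms(3) unfolding is_PTF_def by blast
  define P where "P = (real CARD('n) + 1) powr (real K / 2)"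
  define P' where "P' = (real CARD('n) + 1) powr ((real K + 1) / 2)"
  define \<xi> where "\<xi> = 1 / (2 * P' * real K * M)"
  define S where "S = (\<Sum>\<alpha>\<in>monomials K. \<bar>c \<alpha>\<bar>)"
  have M0: "M \<ge> 0" using cn unfolding coeff_norm_def by (meson order_trans real_sqrt_ge_zero sum_nonneg zero_le_power2)
  have SP: "S \<le> P * M" unfolding S_def P_def by (rule abs_coeff_sum_le[OF cn])
  have PP: "P \<le> P'" unfolding P_def P'_def by (intro powr_mono) auto
  have P0: "P > 0" unfolding P_def by simp
  have S0: "S \<ge> 0" unfolding S_def by (simp add: sum_nonneg)
  have key: "S * real K * \<xi> \<le> 1 / 2"
  proof (cases "K = 0 \<or> M = 0")
    case True thus ?thesis by (auto simp: \<xi>_def)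
  next
    case False
    hence KM: "real K > 0" "M > 0" using M0 by auto
    have "S * real K * \<xi> = S / (2 * P' * M)" using KM by (simp add: \<xi>_def field_simps)
    also have "\<dots> \<le> (P * M) / (2 * P' * M)"
      using SP KM P0 PP by (intro divide_right_mono) auto
    also have "\<dots> \<le> 1 / 2" using KM P0 PP by (simp add: field_simps)
    finally show ?thesis .
  qed
  have pe2: "poly_eval K (\<lambda>\<alpha>. 2 * c \<alpha>) y = 2 * poly_eval K c y" for y :: "real^'n"
    by (simp add: poly_eval_def sum_distrib_left mult.assoc)
  have cn2: "coeff_norm K (\<lambda>\<alpha>. 2 * c \<alpha>) = 2 * coeff_norm K c"
    by (simp add: coeff_norm_def power_mult_distrib sum_distrib_left[symmetric] real_sqrt_mult)
  have upper: "\<bar>poly_eval K c y\<bar> \<le> S" if "y \<in> cube" for y :: "real^'n"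
  proof -
    have "\<bar>poly_eval K c y\<bar> \<le> (\<Sum>\<alpha>\<in>monomials K. \<bar>c \<alpha> * (\<Prod>i\<in>UNIV. (y $ i) ^ (\<alpha> i))\<bar>)"
      unfolding poly_eval_def by (rule sum_abs)
    also have "\<dots> \<le> S" unfolding S_def
      by (intro sum_mono) (auto simp: abs_mult intro!: mult_left_le mono_abs_le1[OF that])
    finally show ?thesis .
  qed
  have lip: "\<bar>poly_eval K c y - poly_eval K c x\<bar> \<le> S * real K * \<xi>"
    if "x \<in> cube" "y \<in> inf_box \<xi> x" for x y :: "real^'n"
  proof -
    have y: "y \<in> cube" "\<forall>i. \<bar>x $ i - y $ i\<bar> \<le> \<xi>" using that by (auto simp: inf_box_def)
    have xi0: "\<xi> \<ge> 0" using y(2) by (meson abs_ge_zero order_trans)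
    have "poly_eval K c y - poly_eval K c x = (\<Sum>\<alpha>\<in>monomials K. c \<alpha> * ((\<Prod>i\<in>UNIV. (y $ i) ^ (\<alpha> i)) - (\<Prod>i\<in>UNIV. (x $ i) ^ (\<alpha> i))))"
      unfolding poly_eval_def by (simp add: sum_subtractf[symmetric] algebra_simps)
    also have "\<bar>\<dots>\<bar> \<le> (\<Sum>\<alpha>\<in>monomials K. \<bar>c \<alpha> * ((\<Prod>i\<in>UNIV. (y $ i) ^ (\<alpha> i)) - (\<Prod>i\<in>UNIV. (x $ i) ^ (\<alpha> i)))\<bar>)"
      by (rule sum_abs)
    also have "\<dots> \<le> (\<Sum>\<alpha>\<in>monomials K. \<bar>c \<alpha>\<bar> * (real K * \<xi>))"
    proof (rule sum_mono)
      fix \<alpha> :: "'n \<Rightarrow> nat" assume a: "\<alpha> \<in> monomials K"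
      have "\<bar>(\<Prod>i\<in>UNIV. (y $ i) ^ (\<alpha> i)) - (\<Prod>i\<in>UNIV. (x $ i) ^ (\<alpha> i))\<bar> \<le> real (\<Sum>i\<in>UNIV. \<alpha> i) * \<xi>"
        by (rule mono_diff_le[OF that(1) y(1) y(2)])
      also have "\<dots> \<le> real K * \<xi>" using a xi0
        by (intro mult_right_mono) (auto simp: monomials_def simp flip: of_nat_sum)
      finally show "\<bar>c \<alpha> * ((\<Prod>i\<in>UNIV. (y $ i) ^ (\<alpha> i)) - (\<Prod>i\<in>UNIV. (x $ i) ^ (\<alpha> i)))\<bar> \<le> \<bar>c \<alpha>\<bar> * (real K * \<xi>)"
        by (simp add: abs_mult mult_left_mono)
    qed
    also have "\<dots> = S * real K * \<xi>" by (simp add: S_def sum_distrib_right mult.assoc)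
    finally show ?thesis .
  qed
  show ?thesis
    unfolding is_robust_PTF_def
  proof (intro exI[of _ "\<lambda>\<alpha>. 2 * c \<alpha>"] conjI ballI)
    show "is_poly_deg K (\<lambda>\<alpha>. 2 * c \<alpha>)" using pd by (simp add: is_poly_deg_def)
    show "coeff_norm K (\<lambda>\<alpha>. 2 * c \<alpha>) \<le> 2 * M" using cn cn2 by simp
  next
    fix x y assume x: "x \<in> X" and y: "y \<in> inf_box (1 / (2 * (real CARD('n) + 1) powr ((real K + 1) / 2) * real K * M)) x"
    have xc: "x \<in> cube" using x assms(1) by auto
    have yb: "y \<in> inf_box \<xi> x" using y by (simp add: \<xi>_def P'_def)
    have yc: "y \<in> cube" using y by (simp add: inf_box_def)
    have f: "f x = 1 \<or> f x = -1" using assms(2) x by auto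
    have "\<bar>poly_eval K c y - poly_eval K c x\<bar> \<le> 1/2" using lip[OF xc yb] key by linarith
    moreover have "poly_eval K c x * f x \<ge> 1" using pos x by auto
    moreover have "\<bar>poly_eval K c y\<bar> \<le> P * M" using upper[OF yc] SP by linarith
    ultimately have A: "\<bar>poly_eval K c y - poly_eval K c x\<bar> \<le> 1/2 \<and> 1 \<le> poly_eval K c x * f x \<and>
        \<bar>poly_eval K c y\<bar> \<le> (real CARD('n) + 1) powr (real K / 2) * M" unfolding P_def by blast
    have "1 \<le> 2 * poly_eval K c y * f x \<and> 2 * poly_eval K c y * f x \<le> 2 * (real CARD('n) + 1) powr (real K / 2) * M"
      using f
    proof
      assume h: "f x = 1" show ?thesis using A[unfolded abs_le_iff] by (simp only: h mult_1_right) linarith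
    next
      assume h: "f x = -1" show ?thesis using A[unfolded abs_le_iff] by (simp only: h mult_minus1_right) linarith
    qed
    thus "1 \<le> poly_eval K (\<lambda>\<alpha>. 2 * c \<alpha>) y * f x"
      and "poly_eval K (\<lambda>\<alpha>. 2 * c \<alpha>) y * f x \<le> 2 * (real CARD('n) + 1) powr (real K / 2) * M"
      unfolding pe2 by auto
  qed
qed

end
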